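(* Assume the standing assumptions below, and write $\mathbf{x}^*(\mathbf{a})\in\mathbb{R}^{2n}$ for the unique solution of the fixed-point equation $\mathbf{x}=\mathbf{g}(\mathbf{a},\mathbf{x})$. For $\boldsymbol{\xi}\in\{0,1\}^n$ define the $2n\times 2n$ matrix $$\mathbf{K}_{\boldsymbol{\xi}}=\begin{pmatrix}\operatorname{diag}(\boldsymbol{\xi})\mathbf{M}^s & \operatorname{diag}(\boldsymbol{\xi})\mathbf{M}^d\\ \operatorname{diag}(\mathbf{1}-\boldsymbol{\xi})\mathbf{M}^s & \operatorname{diag}(\mathbf{1}-\boldsymbol{\xi})\mathbf{M}^d\end{pmatrix}.$$ Then the following hold. 1. $\kappa:=\max_{\boldsymbol{\xi}\in\{0,1\}^n}\|\mathbf{K}_{\boldsymbol{\xi}}\|_1<1$. 2. For all $\mathbf{a}_1,\mathbf{a}_2\in(0,\infty)^n$, $$\|\mathbf{x}^*(\mathbf{a}_1)-\mathbf{x}^*(\mathbf{a}_2)\|_1\le (1-\kappa)^{-1}\,\|\mathbf{a}_1-\mathbf{a}_2\|_1.$$ Here $\|\cdot\|_1$ is the $\ell^1$ norm on vectors, and for matrices it is the induced operator norm, i.e. the maximum absolute column sum.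
   Context: Standing model (network valuation with cross-holdings). There are $n$ firms. Cross-holding matrices. $\mathbf{M}^s,\mathbf{M}^d\in\mathbb{R}^{n\times n}$ are matrices of equity and debt cross-holding fractions: firm $i$ holds fraction $M^s_{ij}$ of firm $j$'s equity and fraction $M^d_{ij}$ of firm $j$'s debt. They satisfy: - $M^s_{ii}=M^d_{ii}=0$ for all $i$; - $M^s_{ij},M^d_{ij}\ge 0$ for all $i,j$; - $\sum_i M^s_{ij}<1$ and $\sum_i M^d_{ij}<1$ for every $j$. Asset and debt data. Firm $i$ has external asset value $a_i>0$ and nominal debt $d_i>0$ (fixed). Fixed-point map. For $\mathbf{x}=(\mathbf{s};\mathbf{r})\in\mathbb{R}^{2n}$ (equity values $\mathbf{s}$ stacked over debt recovery values $\mathbf{r}$), define $\mathbf{g}=(g^s_1,\dots,g^s_n,g^r_1,\dots,g^r_n)$ by $$g^s_i(\mathbf{a},\mathbf{x})=\max\Big\{0,\;a_i+\sum_j M^s_{ij}s_j+\sum_j M^d_{ij}r_j-d_i\Big\},$$ $$g^r_i(\mathbf{a},\mathbf{x})=\min\Big\{d_i,\;a_i+\sum_j M^s_{ij}s_j+\sum_j M^d_{ij}r_j\Big\}.$$ For every $\mathbf{a}\in(0,\infty)^n$ the equation $\mathbf{x}=\mathbf{g}(\mathbf{a},\mathbf{x})$ has a unique (nonnegative) solution, denoted $\mathbf{x}^*(\mathbf{a})=(\mathbf{s}^*(\mathbf{a});\mathbf{r}^*(\mathbf{a}))$. *)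

theory Defs
  imports "HOL-Analysis.Analysis"
begin

text \<open>Firms are indexed by a finite type 'n. A vector in R^{2n} is indexed by
 'n + 'n: Inl i is the equity value s_i, Inr i is the debt recovery value r_i.\<close>

definition l1norm :: "real ^ 'k \<Rightarrow> real" where
  "l1norm x = (\<Sum>i\<in>UNIV. \<bar>x $ i\<bar>)"

definition mat_l1norm :: "real ^ 'k ^ 'k \<Rightarrow> real" where
  "mat_l1norm A = Max (range (\<lambda>j. \<Sum>i\<in>UNIV. \<bar>A $ i $ j\<bar>))"

definition gmap :: "real ^ 'n ^ 'n \<Rightarrow> real ^ 'n ^ 'n \<Rightarrow> real ^ 'n \<Rightarrow> real ^ 'n
                     \<Rightarrow> real ^ ('n + 'n) \<Rightarrow> real ^ ('n + 'n)" where
  "gmap Ms Md d a x = (\<chi> k. case k of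
      Inl i \<Rightarrow> max 0 (a $ i + (\<Sum>j\<in>UNIV. Ms $ i $ j * x $ Inl j)
                          + (\<Sum>j\<in>UNIV. Md $ i $ j * x $ Inr j) - d $ i)
    | Inr i \<Rightarrow> min (d $ i) (a $ i + (\<Sum>j\<in>UNIV. Ms $ i $ j * x $ Inl j)
                          + (\<Sum>j\<in>UNIV. Md $ i $ j * x $ Inr j)))"

definition xstar :: "real ^ 'n ^ 'n \<Rightarrow> real ^ 'n ^ 'n \<Rightarrow> real ^ 'n \<Rightarrow> real ^ 'n
                     \<Rightarrow> real ^ ('n + 'n)" where
  "xstar Ms Md d a = (THE x. x = gmap Ms Md d a x)"

text \<open>K_xi for xi in {0,1}^n, xi encoded as a boolean function (True = 1).\<close>
definition Kmat :: "real ^ 'n ^ 'n \<Rightarrow> real ^ 'n ^ 'n \<Rightarrow> ('n \<Rightarrow> bool)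
                    \<Rightarrow> real ^ ('n + 'n) ^ ('n + 'n)" where
  "Kmat Ms Md xi = (\<chi> k l.
     (let w = (case k of Inl i \<Rightarrow> (if xi i then 1 else 0) | Inr i \<Rightarrow> (if xi i then 0 else 1));
          i = (case k of Inl i \<Rightarrow> i | Inr i \<Rightarrow> i)
      in w * (case l of Inl j \<Rightarrow> Ms $ i $ j | Inr j \<Rightarrow> Md $ i $ j)))"

definition kappa :: "real ^ 'n ^ 'n \<Rightarrow> real ^ 'n ^ 'n \<Rightarrow> real" where
  "kappa Ms Md = Max ((\<lambda>xi. mat_l1norm (Kmat Ms Md xi)) ` UNIV)"

end

theory Submission
  imports Defs
begin

definition colc :: "real ^ 'n ^ 'n \<Rightarrow> real ^ 'n ^ 'n \<Rightarrow> 'n + 'n \<Rightarrow> real" where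
  "colc Ms Md l = (case l of Inl j \<Rightarrow> (\<Sum>i\<in>UNIV. Ms $ i $ j) | Inr j \<Rightarrow> (\<Sum>i\<in>UNIV. Md $ i $ j))"

lemma sum_UNIV_plus:
  fixes f :: "'a::finite + 'b::finite \<Rightarrow> real"
  shows "(\<Sum>k\<in>UNIV. f k) = (\<Sum>i\<in>UNIV. f (Inl i)) + (\<Sum>i\<in>UNIV. f (Inr i))"
proof -
  have "(\<Sum>k\<in>UNIV. f k) = sum f (UNIV <+> UNIV)" by simp
  also have "\<dots> = sum (f \<circ> Inl) UNIV + sum (f \<circ> Inr) UNIV"
    by (rule sum.Plus) auto
  finally show ?thesis by simp
qed

lemma Kcol:
  assumes nonneg_s: "\<forall>i j. Ms $ i $ j \<ge> 0"
    and nonneg_d: "\<forall>i j. Md $ i $ j \<ge> 0"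
  shows "(\<Sum>k\<in>UNIV. \<bar>Kmat Ms Md xi $ k $ l\<bar>) = colc Ms Md l"
proof (cases l)
  case (Inl j)
  have "(\<Sum>k\<in>UNIV. \<bar>Kmat Ms Md xi $ k $ l\<bar>)
      = (\<Sum>i\<in>UNIV. \<bar>(if xi i then 1 else 0) * Ms $ i $ j\<bar>) + (\<Sum>i\<in>UNIV. \<bar>(if xi i then 0 else 1) * Ms $ i $ j\<bar>)"
    by (subst sum_UNIV_plus) (simp add: Kmat_def Inl Let_def)
  also have "\<dots> = (\<Sum>i\<in>UNIV. Ms $ i $ j)"
    by (subst sum.distrib[symmetric], rule sum.cong) (auto simp: nonneg_s)
  finally show ?thesis by (simp add: colc_def Inl)
next
  case (Inr j)
  have "(\<Sum>k\<in>UNIV. \<bar>Kmat Ms Md xi $ k $ l\<bar>)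
      = (\<Sum>i\<in>UNIV. \<bar>(if xi i then 1 else 0) * Md $ i $ j\<bar>) + (\<Sum>i\<in>UNIV. \<bar>(if xi i then 0 else 1) * Md $ i $ j\<bar>)"
    by (subst sum_UNIV_plus) (simp add: Kmat_def Inr Let_def)
  also have "\<dots> = (\<Sum>i\<in>UNIV. Md $ i $ j)"
    by (subst sum.distrib[symmetric], rule sum.cong) (auto simp: nonneg_d)
  finally show ?thesis by (simp add: colc_def Inr)
qed

lemma kappa_eq:
  assumes nonneg_s: "\<forall>i j. Ms $ i $ j \<ge> 0"
    and nonneg_d: "\<forall>i j. Md $ i $ j \<ge> 0"
  shows "kappa Ms Md = Max (range (colc Ms Md))"
proof -
  have "\<And>xi. mat_l1norm (Kmat Ms Md xi) = Max (range (colc Ms Md))"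
    unfolding mat_l1norm_def using Kcol[OF assms] by presburger
  hence "(\<lambda>xi. mat_l1norm (Kmat Ms Md xi)) ` UNIV = {Max (range (colc Ms Md))}" by auto
  thus ?thesis unfolding kappa_def by simp
qed

lemma colc_le_kappa:
  assumes nonneg_s: "\<forall>i j. Ms $ i $ j \<ge> 0"
    and nonneg_d: "\<forall>i j. Md $ i $ j \<ge> 0"
  shows "colc Ms Md l \<le> kappa Ms Md"
  unfolding kappa_eq[OF assms] by (rule Max_ge) auto

lemma kappa_nonneg:
  assumes nonneg_s: "\<forall>i j. Ms $ i $ j \<ge> 0"
    and nonneg_d: "\<forall>i j. Md $ i $ j \<ge> 0"
  shows "0 \<le> kappa Ms Md"
proof -
  have "0 \<le> colc Ms Md l" for l
    by (cases l) (auto simp: colc_def intro!: sum_nonneg simp: assms)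
  thus ?thesis using colc_le_kappa[OF assms] order_trans by blast
qed

lemma kappa_lt:
  assumes nonneg_s: "\<forall>i j. Ms $ i $ j \<ge> 0"
    and nonneg_d: "\<forall>i j. Md $ i $ j \<ge> 0"
    and colsum_s: "\<forall>j. (\<Sum>i\<in>UNIV. Ms $ i $ j) < 1"
    and colsum_d: "\<forall>j. (\<Sum>i\<in>UNIV. Md $ i $ j) < 1"
  shows "kappa Ms Md < 1"
proof -
  have "Max (range (colc Ms Md)) \<in> range (colc Ms Md)" by (rule Max_in) auto
  then obtain l where "Max (range (colc Ms Md)) = colc Ms Md l" by blast
  moreover have "colc Ms Md l < 1" by (cases l) (auto simp: colc_def colsum_s colsum_d)
  ultimately show ?thesis using kappa_eq[OF nonneg_s nonneg_d] by simp
qed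

lemma maxmin_abs:
  fixes t t' d :: real
  shows "\<bar>max 0 (t - d) - max 0 (t' - d)\<bar> + \<bar>min d t - min d t'\<bar> = \<bar>t - t'\<bar>"
  by (auto simp: max_def min_def abs_if)

lemma contr:
  fixes Ms Md :: "real ^ 'n ^ 'n" and d :: "real ^ 'n"
  assumes nonneg_s: "\<forall>i j. Ms $ i $ j \<ge> 0"
    and nonneg_d: "\<forall>i j. Md $ i $ j \<ge> 0"
  shows "l1norm (gmap Ms Md d a x - gmap Ms Md d a' y)
     \<le> l1norm (a - a') + kappa Ms Md * l1norm (x - y)"
proof -
  define K where "K = kappa Ms Md"
  define t where "t a x i = a $ i + (\<Sum>j\<in>UNIV. Ms $ i $ j * x $ Inl j)
                          + (\<Sum>j\<in>UNIV. Md $ i $ j * x $ Inr j)"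
    for a :: "real ^ 'n" and x :: "real ^ ('n + 'n)" and i
  have "l1norm (gmap Ms Md d a x - gmap Ms Md d a' y) = (\<Sum>i\<in>UNIV. \<bar>t a x i - t a' y i\<bar>)"
    unfolding l1norm_def
    apply (subst sum_UNIV_plus)
    apply (subst sum.distrib[symmetric])
    apply (rule sum.cong, rule refl)
    apply (simp add: gmap_def t_def maxmin_abs)
    done
  also have "\<dots> \<le> (\<Sum>i\<in>UNIV. \<bar>a $ i - a' $ i\<bar> + (\<Sum>j\<in>UNIV. Ms $ i $ j * \<bar>x $ Inl j - y $ Inl j\<bar>)
                  + (\<Sum>j\<in>UNIV. Md $ i $ j * \<bar>x $ Inr j - y $ Inr j\<bar>))"
  proof (rule sum_mono)
    fix i
    have 1: "\<bar>(\<Sum>j\<in>UNIV. Ms $ i $ j * x $ Inl j) - (\<Sum>j\<in>UNIV. Ms $ i $ j * y $ Inl j)\<bar>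
        \<le> (\<Sum>j\<in>UNIV. Ms $ i $ j * \<bar>x $ Inl j - y $ Inl j\<bar>)"
    proof -
      have "\<bar>(\<Sum>j\<in>UNIV. Ms $ i $ j * x $ Inl j) - (\<Sum>j\<in>UNIV. Ms $ i $ j * y $ Inl j)\<bar>
          = \<bar>\<Sum>j\<in>UNIV. Ms $ i $ j * (x $ Inl j - y $ Inl j)\<bar>"
        by (simp add: sum_subtractf right_diff_distrib)
      also have "\<dots> \<le> (\<Sum>j\<in>UNIV. \<bar>Ms $ i $ j * (x $ Inl j - y $ Inl j)\<bar>)" by (rule sum_abs)
      also have "\<dots> = (\<Sum>j\<in>UNIV. Ms $ i $ j * \<bar>x $ Inl j - y $ Inl j\<bar>)"
        by (simp add: abs_mult nonneg_s)
      finally show ?thesis .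
    qed
    have 2: "\<bar>(\<Sum>j\<in>UNIV. Md $ i $ j * x $ Inr j) - (\<Sum>j\<in>UNIV. Md $ i $ j * y $ Inr j)\<bar>
        \<le> (\<Sum>j\<in>UNIV. Md $ i $ j * \<bar>x $ Inr j - y $ Inr j\<bar>)"
    proof -
      have "\<bar>(\<Sum>j\<in>UNIV. Md $ i $ j * x $ Inr j) - (\<Sum>j\<in>UNIV. Md $ i $ j * y $ Inr j)\<bar>
          = \<bar>\<Sum>j\<in>UNIV. Md $ i $ j * (x $ Inr j - y $ Inr j)\<bar>"
        by (simp add: sum_subtractf right_diff_distrib)
      also have "\<dots> \<le> (\<Sum>j\<in>UNIV. \<bar>Md $ i $ j * (x $ Inr j - y $ Inr j)\<bar>)" by (rule sum_abs)
      also have "\<dots> = (\<Sum>j\<in>UNIV. Md $ i $ j * \<bar>x $ Inr j - y $ Inr j\<bar>)"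
        by (simp add: abs_mult nonneg_d)
      finally show ?thesis .
    qed
    show "\<bar>t a x i - t a' y i\<bar> \<le> \<bar>a $ i - a' $ i\<bar> + (\<Sum>j\<in>UNIV. Ms $ i $ j * \<bar>x $ Inl j - y $ Inl j\<bar>)
                  + (\<Sum>j\<in>UNIV. Md $ i $ j * \<bar>x $ Inr j - y $ Inr j\<bar>)"
      unfolding t_def using 1 2 by linarith
  qed
  also have "\<dots> = l1norm (a - a') + (\<Sum>j\<in>UNIV. colc Ms Md (Inl j) * \<bar>x $ Inl j - y $ Inl j\<bar>)
                  + (\<Sum>j\<in>UNIV. colc Ms Md (Inr j) * \<bar>x $ Inr j - y $ Inr j\<bar>)"
  proof -
    have e1: "(\<Sum>i\<in>UNIV. \<Sum>j\<in>UNIV. Ms $ i $ j * \<bar>x $ Inl j - y $ Inl j\<bar>)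
        = (\<Sum>j\<in>UNIV. colc Ms Md (Inl j) * \<bar>x $ Inl j - y $ Inl j\<bar>)"
      unfolding colc_def by (simp add: sum_distrib_right, rule sum.swap)
    have e2: "(\<Sum>i\<in>UNIV. \<Sum>j\<in>UNIV. Md $ i $ j * \<bar>x $ Inr j - y $ Inr j\<bar>)
        = (\<Sum>j\<in>UNIV. colc Ms Md (Inr j) * \<bar>x $ Inr j - y $ Inr j\<bar>)"
      unfolding colc_def by (simp add: sum_distrib_right, rule sum.swap)
    show ?thesis unfolding sum.distrib e1 e2 l1norm_def by simp
  qed
  also have "\<dots> \<le> l1norm (a - a') + (\<Sum>j\<in>UNIV. K * \<bar>x $ Inl j - y $ Inl j\<bar>)
                  + (\<Sum>j\<in>UNIV. K * \<bar>x $ Inr j - y $ Inr j\<bar>)"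
    using colc_le_kappa[OF assms] unfolding K_def
    by (intro add_mono order_refl sum_mono mult_right_mono) auto
  also have "\<dots> = l1norm (a - a') + K * l1norm (x - y)"
  proof -
    have "l1norm (x - y) = (\<Sum>j\<in>UNIV. \<bar>x $ Inl j - y $ Inl j\<bar>) + (\<Sum>j\<in>UNIV. \<bar>x $ Inr j - y $ Inr j\<bar>)"
      unfolding l1norm_def by (subst sum_UNIV_plus) simp
    thus ?thesis by (simp add: sum_distrib_left[symmetric] distrib_left)
  qed
  finally show ?thesis unfolding K_def .
qed

lemma l1_nonneg: "0 \<le> l1norm x"
  unfolding l1norm_def by (rule sum_nonneg) auto

lemma l1_zero: "l1norm x = 0 \<Longrightarrow> x = 0"
  unfolding l1norm_def
  by (subst (asm) sum_nonneg_eq_0_iff) (auto simp: vec_eq_iff)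

lemma norm_le_l1: "norm x \<le> l1norm x"
  unfolding l1norm_def by (rule norm_le_l1_cart)

lemma l1_le_norm: "l1norm (x :: real ^ 'k) \<le> real CARD('k) * norm x"
proof -
  have "l1norm x \<le> (\<Sum>i\<in>(UNIV::'k set). norm x)"
    unfolding l1norm_def by (rule sum_mono) (rule component_le_norm_cart)
  thus ?thesis by simp
qed

lemma fix_exists:
  fixes Ms Md :: "real ^ 'n ^ 'n" and d :: "real ^ 'n"
  assumes nonneg_s: "\<forall>i j. Ms $ i $ j \<ge> 0"
    and nonneg_d: "\<forall>i j. Md $ i $ j \<ge> 0"
    and lt: "kappa Ms Md < 1"
  shows "\<exists>x. x = gmap Ms Md d a x"
proof -
  define K where "K = kappa Ms Md"
  define G where "G = gmap Ms Md d a"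
  define N where "N = real CARD('n + 'n)"
  have K0: "0 \<le> K" unfolding K_def by (rule kappa_nonneg[OF assms(1,2)])
  have N0: "0 < N" unfolding N_def by simp
  have GC: "l1norm (G x - G y) \<le> K * l1norm (x - y)" for x y
    using contr[OF nonneg_s nonneg_d, of d a x a y] unfolding G_def K_def l1norm_def by simp
  have GM: "l1norm ((G^^m) x - (G^^m) y) \<le> K^m * l1norm (x - y)" for m x y
  proof (induction m)
    case 0 thus ?case by simp
  next
    case (Suc m)
    have "l1norm ((G^^Suc m) x - (G^^Suc m) y) \<le> K * l1norm ((G^^m) x - (G^^m) y)"
      using GC by simp
    also have "\<dots> \<le> K * (K^m * l1norm (x - y))" using Suc K0 by (rule mult_left_mono)
    finally show ?case by (simp add: algebra_simps)
  qed
  obtain m where m: "K^m < 1 / N" using real_arch_pow_inv[of "1/N" K] N0 lt K_def by auto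
  have c1: "K^m * N < 1" using m N0 by (simp add: field_simps)
  have c0: "0 \<le> K^m * N" using K0 N0 by simp
  have "\<forall>x y. dist ((G^^m) x) ((G^^m) y) \<le> (K^m * N) * dist x y"
  proof (intro allI)
    fix x y :: "real ^ ('n + 'n)"
    have "dist ((G^^m) x) ((G^^m) y) \<le> l1norm ((G^^m) x - (G^^m) y)"
      by (simp add: dist_norm norm_le_l1)
    also have "\<dots> \<le> K^m * l1norm (x - y)" by (rule GM)
    also have "\<dots> \<le> K^m * (N * norm (x - y))"
      using l1_le_norm[of "x - y"] K0 unfolding N_def by (simp add: mult_left_mono)
    finally show "dist ((G^^m) x) ((G^^m) y) \<le> (K^m * N) * dist x y"
      by (simp add: dist_norm algebra_simps)
  qed
  then obtain p where p: "(G^^m) p = p" and pu: "\<And>q. (G^^m) q = q \<Longrightarrow> q = p"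
    using banach_fix_type[OF c0 c1, of "G^^m"] by metis
  have "(G^^m) (G p) = G p" by (metis funpow_swap1 p)
  hence "G p = p" by (rule pu)
  thus ?thesis unfolding G_def by metis
qed

theorem mainTheorem1:
  fixes Ms Md :: "real ^ 'n ^ 'n" and d :: "real ^ 'n"
  assumes diag_s: "\<forall>i. Ms $ i $ i = 0"
    and diag_d: "\<forall>i. Md $ i $ i = 0"
    and nonneg_s: "\<forall>i j. Ms $ i $ j \<ge> 0"
    and nonneg_d: "\<forall>i j. Md $ i $ j \<ge> 0"
    and colsum_s: "\<forall>j. (\<Sum>i\<in>UNIV. Ms $ i $ j) < 1"
    and colsum_d: "\<forall>j. (\<Sum>i\<in>UNIV. Md $ i $ j) < 1"
    and d_pos: "\<forall>i. d $ i > 0"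
  shows "kappa Ms Md < 1 \<and>
    (\<forall>a1 a2 :: real ^ 'n. (\<forall>i. a1 $ i > 0) \<longrightarrow> (\<forall>i. a2 $ i > 0) \<longrightarrow>
       l1norm (xstar Ms Md d a1 - xstar Ms Md d a2)
         \<le> inverse (1 - kappa Ms Md) * l1norm (a1 - a2))"
proof -
  define K where "K = kappa Ms Md"
  have lt: "K < 1" unfolding K_def by (rule kappa_lt[OF nonneg_s nonneg_d colsum_s colsum_d])
  have fx: "xstar Ms Md d a = gmap Ms Md d a (xstar Ms Md d a)" for a
  proof -
    obtain x where x: "x = gmap Ms Md d a x"
      using fix_exists[OF nonneg_s nonneg_d, of d a] lt K_def by auto
    have uq: "y = x" if y: "y = gmap Ms Md d a y" for y
    proof -
      have "l1norm (y - x) \<le> l1norm (a - a) + K * l1norm (y - x)"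
        using contr[OF nonneg_s nonneg_d, of d a y a x] y x unfolding K_def by simp
      hence "(1 - K) * l1norm (y - x) \<le> 0" by (simp add: l1norm_def algebra_simps)
      hence "l1norm (y - x) \<le> 0" using lt by (simp add: mult_le_0_iff)
      hence "l1norm (y - x) = 0" using l1_nonneg[of "y - x"] by linarith
      thus ?thesis using l1_zero by force
    qed
    have "xstar Ms Md d a = x" unfolding xstar_def
      by (rule the_equality[where P="\<lambda>x. x = gmap Ms Md d a x", OF x uq])
    thus ?thesis using x by simp
  qed
  have "l1norm (xstar Ms Md d a1 - xstar Ms Md d a2) \<le> inverse (1 - K) * l1norm (a1 - a2)" for a1 a2
  proof -
    let ?x = "xstar Ms Md d a1" and ?y = "xstar Ms Md d a2"
    have "l1norm (?x - ?y) \<le> l1norm (a1 - a2) + K * l1norm (?x - ?y)"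
      using contr[OF nonneg_s nonneg_d, of d a1 ?x a2 ?y] fx[of a1] fx[of a2] unfolding K_def by simp
    hence "(1 - K) * l1norm (?x - ?y) \<le> l1norm (a1 - a2)" by (simp add: algebra_simps)
    thus ?thesis using lt by (simp add: field_simps)
  qed
  thus ?thesis using lt unfolding K_def by blast
qed

end
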